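(* Let $n=2$, $E=\{p\in\Delta_2:p_1,p_2\in\mathbb Q\}$, and $\Theta=(\overline{\Delta}_2)^E$ with the topology of pointwise convergence. Let $\nu_0$ be the infinite product of the uniform distribution on $\overline{\Delta}_2$ (so the values $\pi(p)$, $p\in E$, are i.i.d. uniform). Let $\delta>0$ be rational and define $\mu(0)=(\frac12,\frac12)$, $\mu(t+1)=\left(\frac{\mu_1(t)}{1+\delta\mu_2(t)},\frac{(1+\delta)\mu_2(t)}{1+\delta\mu_2(t)}\right)$. Then $\widehat V(t)=\frac{\mu_2(t)}{\mu_2(0)}\left(1-\frac12\frac{\delta}{1+\delta}\right)^t$ and, with $V^*(t)=\max_{\pi\in\Theta}V_\pi(t)$, $\lim_{t\to\infty}\frac1t\log\frac{\widehat V(t)}{V^*(t)}=\log\left(1-\frac12\frac\delta{1+\delta}\right)<0$.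
   Context: $\Delta_2=\{p\in(0,1)^2:p_1+p_2=1\}$, $\overline{\Delta}_2$ its closure. Relative value of a portfolio map $\pi:E\to\overline{\Delta}_2$: $V_\pi(0)=1$, $V_\pi(t+1)=V_\pi(t)\sum_{i=1}^2\pi_i(\mu(t))\mu_i(t+1)/\mu_i(t)$. $\widehat V(t)=\int_\Theta V_\pi(t)\,d\nu_0(\pi)$ is the relative value of Cover's portfolio $\widehat\pi(t)=\int\pi(\mu(t))\,d\nu_t(\pi)$, where $\nu_t(B)=\frac1{\widehat V(t)}\int_BV_\pi(t)\,d\nu_0(\pi)$. *)

theory Defs
  imports "HOL-Probability.Probability"
begin

definition open_simplex2 :: "(real \<times> real) set" where
  "open_simplex2 = {p. fst p > 0 \<and> snd p > 0 \<and> fst p + snd p = 1}"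

definition closed_simplex2 :: "(real \<times> real) set" where
  "closed_simplex2 = {p. fst p \<ge> 0 \<and> snd p \<ge> 0 \<and> fst p + snd p = 1}"

definition E2 :: "(real \<times> real) set" where
  "E2 = {p \<in> open_simplex2. fst p \<in> \<rat> \<and> snd p \<in> \<rat>}"

definition Theta :: "((real \<times> real) \<Rightarrow> (real \<times> real)) set" where
  "Theta = (\<Pi>\<^sub>E p\<in>E2. closed_simplex2)"

definition unif_simplex2 :: "(real \<times> real) measure" where
  "unif_simplex2 = distr (uniform_measure lborel {0..1}) borel (\<lambda>u. (u, 1 - u))"

definition nu0 :: "((real \<times> real) \<Rightarrow> (real \<times> real)) measure" where
  "nu0 = (\<Pi>\<^sub>M p\<in>E2. unif_simplex2)"

fun mu_ex :: "real \<Rightarrow> nat \<Rightarrow> real \<times> real" where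
  "mu_ex \<delta> 0 = (1/2, 1/2)"
| "mu_ex \<delta> (Suc t) =
     (let m = mu_ex \<delta> t in
       (fst m / (1 + \<delta> * snd m), (1 + \<delta>) * snd m / (1 + \<delta> * snd m)))"

fun relV :: "((real \<times> real) \<Rightarrow> (real \<times> real)) \<Rightarrow> (nat \<Rightarrow> real \<times> real) \<Rightarrow> nat \<Rightarrow> real" where
  "relV \<pi> \<mu> 0 = 1"
| "relV \<pi> \<mu> (Suc t) = relV \<pi> \<mu> t *
     (fst (\<pi> (\<mu> t)) * fst (\<mu> (Suc t)) / fst (\<mu> t)
      + snd (\<pi> (\<mu> t)) * snd (\<mu> (Suc t)) / snd (\<mu> t))"

definition Vhat :: "(nat \<Rightarrow> real \<times> real) \<Rightarrow> nat \<Rightarrow> real" where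
  "Vhat \<mu> t = (\<integral>\<pi>. relV \<pi> \<mu> t \<partial>nu0)"

definition Vstar :: "(nat \<Rightarrow> real \<times> real) \<Rightarrow> nat \<Rightarrow> real" where
  "Vstar \<mu> t = (SUP \<pi>\<in>Theta. relV \<pi> \<mu> t)"

end

theory Submission imports Defs begin

lemma U_eq: "uniform_measure lborel {0..1::real} = density lborel (\<lambda>x. ennreal (indicator {0..1} x))"
  by (simp add: uniform_measure_def ennreal_indicator divide_ennreal_def)

lemma int_U:
  fixes a b :: real
  shows "integrable (uniform_measure lborel {0..1}) (\<lambda>u. u*a + (1-u)*b)"
    "integral\<^sup>L (uniform_measure lborel {0..1}) (\<lambda>u. u*a + (1-u)*b) = (a+b)/2"
proof -
  have i: "integrable lborel (\<lambda>x. (x*a + (1-x)*b) * indicator {0..1::real} x)"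
    by (rule borel_integrable_atLeastAtMost) (intro continuous_intros)
  show "integrable (uniform_measure lborel {0..1}) (\<lambda>u. u*a + (1-u)*b)"
    unfolding U_eq
    by (subst integrable_density) (use i in \<open>auto simp: mult.commute\<close>)
  have "integral\<^sup>L (uniform_measure lborel {0..1}) (\<lambda>u. u*a + (1-u)*b)
      = integral\<^sup>L lborel (\<lambda>x. indicator {0..1::real} x *\<^sub>R (x*a + (1-x)*b))"
    unfolding U_eq by (subst integral_density) auto
  also have "\<dots> = (a*1^2/2 + b*(1 - 1^2/2)) - (a*0^2/2 + b*(0 - 0^2/2))"
    by (rule integral_FTC_atLeastAtMost[where F="\<lambda>x. a*x^2/2 + b*(x - x^2/2)"])
       (auto intro!: derivative_eq_intros continuous_intros simp: has_real_derivative_iff_has_vector_derivative[symmetric] algebra_simps)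
  finally show "integral\<^sup>L (uniform_measure lborel {0..1}) (\<lambda>u. u*a + (1-u)*b) = (a+b)/2" by simp
qed

lemma prob_U: "prob_space (uniform_measure lborel {0..1::real})"
  by (rule prob_space_uniform_measure) auto

lemma prob_unif: "prob_space unif_simplex2"
  unfolding unif_simplex2_def
  by (rule prob_space.prob_space_distr[OF prob_U]) simp


lemma relV_prod: "relV \<pi> \<mu> t = (\<Prod>s<t. fst (\<pi> (\<mu> s)) * fst (\<mu> (Suc s)) / fst (\<mu> s)
      + snd (\<pi> (\<mu> s)) * snd (\<mu> (Suc s)) / snd (\<mu> s))"
  by (induction t) (simp_all add: mult.commute)

context
  fixes \<delta> :: real
  assumes dQ: "\<delta> \<in> \<rat>" and dpos: "\<delta> > 0"
begin

definition A :: "real \<times> real \<Rightarrow> real" where "A p = 1 / (1 + \<delta> * snd p)"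
definition B :: "real \<times> real \<Rightarrow> real" where "B p = (1 + \<delta>) / (1 + \<delta> * snd p)"

lemma mu_props: "fst (mu_ex \<delta> t) > 0 \<and> snd (mu_ex \<delta> t) > 0 \<and> fst (mu_ex \<delta> t) + snd (mu_ex \<delta> t) = 1
   \<and> fst (mu_ex \<delta> t) \<in> \<rat> \<and> snd (mu_ex \<delta> t) \<in> \<rat>"
proof (induction t)
  case 0 then show ?case by simp
next
  case (Suc t)
  obtain f s where m: "mu_ex \<delta> t = (f, s)" by (cases "mu_ex \<delta> t")
  with Suc have h: "f > 0" "s > 0" "f + s = 1" "f \<in> \<rat>" "s \<in> \<rat>" by auto
  have d: "1 + \<delta> * s > 0" using h dpos by (simp add: add_pos_pos)
  have "(f + (1 + \<delta>) * s) / (1 + \<delta> * s) = 1" using d h by (simp add: field_simps)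
  then have "f / (1 + \<delta> * s) + (1 + \<delta>) * s / (1 + \<delta> * s) = 1" by (simp add: add_divide_distrib)
  with h d dQ dpos show ?case by (auto simp: m Let_def intro!: Rats_divide Rats_add Rats_mult divide_pos_pos mult_pos_pos)
qed

lemma mu_E: "mu_ex \<delta> t \<in> E2"
  using mu_props[of t] by (auto simp: E2_def open_simplex2_def)

lemma snd_mono: "strict_mono (\<lambda>t. snd (mu_ex \<delta> t))"
proof (rule strict_monoI_Suc)
  fix t
  obtain f s where m: "mu_ex \<delta> t = (f, s)" by (cases "mu_ex \<delta> t")
  with mu_props[of t] have h: "f > 0" "s > 0" "f + s = 1" by auto
  have d: "1 + \<delta> * s > 0" using h dpos by (simp add: add_pos_pos)
  have "s * (1 + \<delta> * s) < (1 + \<delta>) * s" using h dpos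
    by (simp add: algebra_simps)
  then show "snd (mu_ex \<delta> t) < snd (mu_ex \<delta> (Suc t))"
    using d by (simp add: m Let_def pos_less_divide_eq)
qed

lemma mu_inj: "inj (mu_ex \<delta>)"
  using snd_mono by (metis injI strict_mono_eq)

lemma fst_ratio: "fst (mu_ex \<delta> (Suc s)) / fst (mu_ex \<delta> s) = A (mu_ex \<delta> s)"
  using mu_props[of s] by (simp add: Let_def A_def)

lemma snd_ratio: "snd (mu_ex \<delta> (Suc s)) / snd (mu_ex \<delta> s) = B (mu_ex \<delta> s)"
  using mu_props[of s] by (simp add: Let_def B_def)

lemma relV_mu: "relV \<pi> (mu_ex \<delta>) t = (\<Prod>s<t. fst (\<pi> (mu_ex \<delta> s)) * A (mu_ex \<delta> s)
      + snd (\<pi> (mu_ex \<delta> s)) * B (mu_ex \<delta> s))"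
  unfolding relV_prod
  by (intro prod.cong refl) (simp only: times_divide_eq_right[symmetric] fst_ratio snd_ratio)

lemma snd_prod: "snd (mu_ex \<delta> t) / snd (mu_ex \<delta> 0) = (\<Prod>s<t. B (mu_ex \<delta> s))"
proof (induction t)
  case 0 then show ?case by simp
next
  case (Suc t)
  have "snd (mu_ex \<delta> (Suc t)) = snd (mu_ex \<delta> t) * B (mu_ex \<delta> t)"
    using snd_ratio[of t] mu_props[of t] by (simp add: field_simps)
  then show ?case using Suc by simp
qed

lemma AB: "0 \<le> snd p \<Longrightarrow> A p \<le> B p" "0 \<le> snd p \<Longrightarrow> 0 < A p" "0 \<le> snd p \<Longrightarrow> 0 < B p"
  using dpos by (auto simp: A_def B_def divide_right_mono add_pos_nonneg)


lemma sets_unif[measurable_cong]: "sets unif_simplex2 = sets borel"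
  by (simp add: unif_simplex2_def)

lemma int_unif:
  fixes a b :: real
  shows "integrable unif_simplex2 (\<lambda>x. fst x * a + snd x * b)"
    "integral\<^sup>L unif_simplex2 (\<lambda>x. fst x * a + snd x * b) = (a + b) / 2"
proof -
  have m1: "(\<lambda>u::real. (u, 1-u)) \<in> measurable (uniform_measure lborel {0..1}) borel"
    by measurable
  have m2: "(\<lambda>x::real\<times>real. fst x * a + snd x * b) \<in> borel_measurable borel"
    by (rule borel_measurable_continuous_onI) (intro continuous_intros)
  show "integrable unif_simplex2 (\<lambda>x. fst x * a + snd x * b)"
    unfolding unif_simplex2_def
    by (subst integrable_distr_eq[OF m1 m2]) (simp add: int_U)
  show "integral\<^sup>L unif_simplex2 (\<lambda>x. fst x * a + snd x * b) = (a + b) / 2"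
    unfolding unif_simplex2_def
    by (subst integral_distr[OF m1 m2]) (simp add: int_U)
qed

lemma PPS: "product_prob_space (\<lambda>_. unif_simplex2)"
  by (simp add: product_prob_space_def product_prob_space_axioms_def product_sigma_finite_def
      prob_unif prob_space_imp_sigma_finite)

lemma Vhat_eq: "Vhat (mu_ex \<delta>) t = (\<Prod>s<t. (A (mu_ex \<delta> s) + B (mu_ex \<delta> s)) / 2)"
proof -
  interpret P: product_prob_space "\<lambda>_. unif_simplex2" E2 by (rule PPS)
  define h where "h = (\<lambda>p (x::real\<times>real). fst x * A p + snd x * B p)"
  define J where "J = mu_ex \<delta> ` {..<t}"
  have J: "finite J" "J \<subseteq> E2" using mu_E by (auto simp: J_def)
  have hm: "h p \<in> borel_measurable unif_simplex2" for p
    unfolding h_def measurable_cong_sets[OF sets_unif refl]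
    by (rule borel_measurable_continuous_onI) (intro continuous_intros)
  have Fm: "(\<lambda>y. \<Prod>p\<in>J. h p (y p)) \<in> borel_measurable (Pi\<^sub>M J (\<lambda>_. unif_simplex2))"
    proof (rule borel_measurable_prod)
    fix p assume "p \<in> J"
    show "(\<lambda>y. h p (y p)) \<in> borel_measurable (Pi\<^sub>M J (\<lambda>_. unif_simplex2))"
      by (rule measurable_compose[where g="h p", OF measurable_component_singleton[OF \<open>p \<in> J\<close>] hm])
  qed
  have inj: "inj_on (mu_ex \<delta>) {..<t}" using mu_inj by (simp add: inj_on_def inj_def)
  have "Vhat (mu_ex \<delta>) t = (\<integral>\<pi>. (\<Prod>p\<in>J. h p (restrict \<pi> J p)) \<partial>nu0)"
    unfolding Vhat_def relV_mu J_def
    apply (rule Bochner_Integration.integral_cong[OF refl])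
    apply (simp add: prod.reindex[OF inj] h_def)
    done
  also have "\<dots> = (\<integral>y. (\<Prod>p\<in>J. h p (y p)) \<partial>distr nu0 (Pi\<^sub>M J (\<lambda>_. unif_simplex2)) (\<lambda>\<pi>. restrict \<pi> J))"
    unfolding nu0_def
    by (subst integral_distr[OF measurable_restrict_subset[OF J(2)] Fm]) simp
  also have "\<dots> = (\<integral>y. (\<Prod>p\<in>J. h p (y p)) \<partial>Pi\<^sub>M J (\<lambda>_. unif_simplex2))"
    unfolding nu0_def by (simp add: P.distr_PiM_restrict_finite J)
  also have "\<dots> = (\<Prod>p\<in>J. integral\<^sup>L unif_simplex2 (h p))"
    by (rule P.product_integral_prod) (auto simp: J h_def int_unif)
  also have "\<dots> = (\<Prod>p\<in>J. (A p + B p) / 2)"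
    by (simp add: h_def int_unif)
  also have "\<dots> = (\<Prod>s<t. (A (mu_ex \<delta> s) + B (mu_ex \<delta> s)) / 2)"
    unfolding J_def by (simp add: prod.reindex[OF inj])
  finally show ?thesis .
qed

definition pistar :: "real \<times> real \<Rightarrow> real \<times> real" where
  "pistar = restrict (\<lambda>_. (0, 1)) E2"

lemma pistar_Theta: "pistar \<in> Theta"
  by (auto simp: pistar_def Theta_def closed_simplex2_def)

lemma relV_pistar: "relV pistar (mu_ex \<delta>) t = (\<Prod>s<t. B (mu_ex \<delta> s))"
  unfolding relV_mu by (intro prod.cong refl) (simp add: pistar_def mu_E)

lemma relV_le: assumes "\<pi> \<in> Theta" shows "relV \<pi> (mu_ex \<delta>) t \<le> (\<Prod>s<t. B (mu_ex \<delta> s))"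
  unfolding relV_mu
proof (rule prod_mono, rule conjI)
  fix s
  let ?p = "mu_ex \<delta> s" and ?x = "\<pi> (mu_ex \<delta> s)"
  have x: "?x \<in> closed_simplex2" using assms mu_E[of s] by (auto simp: Theta_def)
  then have x1: "fst ?x \<ge> 0" "snd ?x \<ge> 0" "fst ?x + snd ?x = 1" by (auto simp: closed_simplex2_def)
  have sp: "0 \<le> snd ?p" using mu_props[of s] by simp
  note ab = AB[OF sp]
  show "0 \<le> fst ?x * A ?p + snd ?x * B ?p"
    using x1 ab by (intro add_nonneg_nonneg mult_nonneg_nonneg) auto
  have "fst ?x * A ?p + snd ?x * B ?p \<le> fst ?x * B ?p + snd ?x * B ?p"
    using x1 ab by (intro add_right_mono mult_left_mono) auto
  also have "\<dots> = B ?p" using x1 by (simp add: distrib_right[symmetric])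
  finally show "fst ?x * A ?p + snd ?x * B ?p \<le> B ?p" .
qed

lemma Vstar_eq: "Vstar (mu_ex \<delta>) t = (\<Prod>s<t. B (mu_ex \<delta> s))"
  unfolding Vstar_def
proof (rule cSup_eq_maximum)
  show "(\<Prod>s<t. B (mu_ex \<delta> s)) \<in> (\<lambda>\<pi>. relV \<pi> (mu_ex \<delta>) t) ` Theta"
    using relV_pistar[symmetric] pistar_Theta by blast
  show "\<And>x. x \<in> (\<lambda>\<pi>. relV \<pi> (mu_ex \<delta>) t) ` Theta \<Longrightarrow> x \<le> (\<Prod>s<t. B (mu_ex \<delta> s))"
    using relV_le by blast
qed

lemma Bprod_pos: "(\<Prod>s<t. B (mu_ex \<delta> s)) > 0"
proof (rule prod_pos)
  fix s assume "s \<in> {..<t}"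
  have "0 \<le> snd (mu_ex \<delta> s)" using mu_props[of s] by simp
  then show "0 < B (mu_ex \<delta> s)" by (rule AB(3))
qed

lemma AB_c: "(A (mu_ex \<delta> s) + B (mu_ex \<delta> s)) / 2 = B (mu_ex \<delta> s) * (1 - (1/2) * (\<delta> / (1 + \<delta>)))"
proof -
  define D where "D = 1 + \<delta> * snd (mu_ex \<delta> s)"
  have D: "D > 0" using mu_props[of s] dpos by (simp add: add_pos_pos D_def)
  have c: "1 - (1/2) * (\<delta> / (1 + \<delta>)) = (2 + \<delta>) / (2 * (1 + \<delta>))"
    using dpos by (simp add: field_simps)
  have d1: "1 + \<delta> \<noteq> 0" using dpos by simp
  have "(1 + \<delta>) / D * ((2 + \<delta>) / (2 * (1 + \<delta>))) = (2 + \<delta>) / (2 * D)"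
  proof -
    have g: "\<And>e y. e \<noteq> 0 \<Longrightarrow> e / D * (y / (2 * e)) = y / (2 * D)"
      using D by (simp add: field_simps)
    show ?thesis by (rule g[OF d1])
  qed
  moreover have "(1 / D + (1 + \<delta>) / D) / 2 = (2 + \<delta>) / (2 * D)"
  proof -
    have "1 / D + (1 + \<delta>) / D = (2 + \<delta>) / D"
      by (simp only: add_divide_distrib[symmetric]) simp
    then show ?thesis by (simp add: mult.commute)
  qed
  ultimately have "(1 / D + (1 + \<delta>) / D) / 2 = (1 + \<delta>) / D * ((2 + \<delta>) / (2 * (1 + \<delta>)))"
    by metis
  then show ?thesis unfolding c A_def B_def D_def[symmetric] .
qed

lemma Vhat_closed: "Vhat (mu_ex \<delta>) t = (\<Prod>s<t. B (mu_ex \<delta> s)) * (1 - (1/2) * (\<delta> / (1 + \<delta>))) ^ t"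
  unfolding Vhat_eq AB_c by (simp add: prod.distrib)
end

theorem proposition3p7:
  fixes \<delta> :: real
  assumes "\<delta> \<in> \<rat>" and "\<delta> > 0"
  shows "(\<forall>t. Vhat (mu_ex \<delta>) t
           = snd (mu_ex \<delta> t) / snd (mu_ex \<delta> 0) * (1 - (1/2) * (\<delta> / (1 + \<delta>))) ^ t)
    \<and> (\<forall>t. \<exists>\<pi>\<in>Theta. relV \<pi> (mu_ex \<delta>) t = Vstar (mu_ex \<delta>) t)
    \<and> ((\<lambda>t. (1 / real t) * ln (Vhat (mu_ex \<delta>) t / Vstar (mu_ex \<delta>) t))
           \<longlongrightarrow> ln (1 - (1/2) * (\<delta> / (1 + \<delta>)))) at_top
    \<and> ln (1 - (1/2) * (\<delta> / (1 + \<delta>))) < 0"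
proof -
  note a = assms
  define c where "c = 1 - (1/2) * (\<delta> / (1 + \<delta>))"
  have c: "0 < c" "c < 1" using assms by (auto simp: c_def field_simps)
  have 1: "\<forall>t. Vhat (mu_ex \<delta>) t
           = snd (mu_ex \<delta> t) / snd (mu_ex \<delta> 0) * (1 - (1/2) * (\<delta> / (1 + \<delta>))) ^ t"
    using Vhat_closed[OF a] snd_prod[OF a] by presburger
  have 2: "\<forall>t. \<exists>\<pi>\<in>Theta. relV \<pi> (mu_ex \<delta>) t = Vstar (mu_ex \<delta>) t"
    using pistar_Theta[OF a] relV_pistar[OF a] Vstar_eq[OF a] by (intro allI bexI[of _ pistar]) auto
  have q: "Vhat (mu_ex \<delta>) t / Vstar (mu_ex \<delta>) t = c ^ t" for t
  proof -
    have "Vhat (mu_ex \<delta>) t = (\<Prod>s<t. B \<delta> (mu_ex \<delta> s)) * c ^ t"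
      using Vhat_closed[OF a, of t] unfolding c_def .
    moreover have g: "\<And>P x::real. P > 0 \<Longrightarrow> P * x / P = x" by simp
    ultimately show ?thesis using Vstar_eq[OF a, of t] Bprod_pos[OF a, of t] by metis
  qed
  have ev: "\<forall>\<^sub>F t in at_top. ln c = (1 / real t) * ln (Vhat (mu_ex \<delta>) t / Vstar (mu_ex \<delta>) t)"
    using eventually_ge_at_top[of "1::nat"]
    by eventually_elim (simp add: q ln_realpow)
  have 3: "((\<lambda>t. (1 / real t) * ln (Vhat (mu_ex \<delta>) t / Vstar (mu_ex \<delta>) t)) \<longlongrightarrow> ln c) at_top"
    by (rule Lim_transform_eventually[OF tendsto_const ev])
  have 4: "ln c < 0" using c by simp
  show ?thesis using 1 2 3 4 unfolding c_def by blast
qed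
end
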